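(* Let $r\in\mathbb{R}$, $b\in\mathbb{R}$, $\mu\in\mathbb{R}^N$, and let $\Sigma\in\mathbb{R}^{N\times N}$ be a symmetric positive definite matrix. Let $E:=\{x\in\mathbb{R}^N\setminus\{0\}: b-\mu^Tx>0\}$ and define $f(x):=\left(\frac{b-\mu^Tx}{\sqrt{x^T\Sigma x}}\right)^r$ on $E$. If $r=0$, then $f$ is locally concave on $E$. If $r\neq0$, then $\mathrm{sign}(-r)\cdot f$ is locally convex on $E$ if and only if for every $x\in E$ $$\mu^T\Sigma^{-1}\mu\le(2-r)\frac{(\mu^Tx)^2}{x^T\Sigma x}-2r\sqrt{\theta}\,\frac{\mu^Tx}{\sqrt{x^T\Sigma x}}-(r+1)\theta,\qquad \theta:=\frac{(b-\mu^Tx)^2}{x^T\Sigma x}.$$ Moreover, the function $x\mapsto\ln\frac{b-\mu^Tx}{\sqrt{x^T\Sigma x}}$ is locally concave on $E$ if and only if for every $x\in E$ $$\mu^T\Sigma^{-1}\mu\le 2\frac{(\mu^Tx)^2}{x^T\Sigma x}-\theta.$$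
   Context: A twice differentiable function is locally convex (resp. locally concave) on a set $A$ if its Hessian is positive semidefinite (resp. negative semidefinite) at every point of $A$. *)

theory Defs
  imports "HOL-Analysis.Analysis"
begin

definition has_hessian_at :: "(real^'n \<Rightarrow> real) \<Rightarrow> real^'n \<Rightarrow> real^'n^'n \<Rightarrow> bool" where
  "has_hessian_at f x H \<longleftrightarrow>
     (\<exists>g. (\<forall>\<^sub>F y in nhds x. (f has_derivative (\<lambda>h. g y \<bullet> h)) (at y))
          \<and> (g has_derivative (\<lambda>h. H *v h)) (at x))"

definition locally_convex_on :: "(real^'n) set \<Rightarrow> (real^'n \<Rightarrow> real) \<Rightarrow> bool" where
  "locally_convex_on A f \<longleftrightarrow>
     (\<forall>x\<in>A. \<exists>H. has_hessian_at f x H \<and> (\<forall>v. 0 \<le> v \<bullet> (H *v v)))"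

definition locally_concave_on :: "(real^'n) set \<Rightarrow> (real^'n \<Rightarrow> real) \<Rightarrow> bool" where
  "locally_concave_on A f \<longleftrightarrow>
     (\<forall>x\<in>A. \<exists>H. has_hessian_at f x H \<and> (\<forall>v. v \<bullet> (H *v v) \<le> 0))"

end

theory Submission
  imports Defs
begin


lemma sym_form:
  fixes S :: "real^'n^'n"
  assumes "transpose S = S"
  shows "u \<bullet> (S *v w) = w \<bullet> (S *v u)"
proof -
  have "u \<bullet> (S *v w) = (u v* S) \<bullet> w" by (simp add: dot_lmul_matrix)
  also have "u v* S = transpose S *v u" by simp
  finally show ?thesis using assms by (simp add: inner_commute)
qed

lemma inv_apply:
  fixes S :: "real^'n^'n"
  assumes pd: "\<forall>x. x \<noteq> 0 \<longrightarrow> 0 < x \<bullet> (S *v x)"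
  shows "S *v (matrix_inv S *v m) = m"
proof -
  have "\<forall>x. S *v x = 0 \<longrightarrow> x = 0"
    using pd by (metis inner_zero_right less_irrefl)
  then have "invertible S"
    using invertible_left_inverse matrix_left_invertible_ker by blast
  then have "S ** matrix_inv S = mat 1 \<and> matrix_inv S ** S = mat 1"
    unfolding invertible_def matrix_inv_def by (rule someI_ex)
  then show ?thesis
    by (simp add: matrix_vector_mul_assoc)
qed

lemma cs_form:
  fixes S :: "real^'n^'n"
  assumes sym: "transpose S = S" and pd: "\<forall>x. x \<noteq> 0 \<longrightarrow> 0 < x \<bullet> (S *v x)"
  shows "(u \<bullet> (S *v w))^2 \<le> (u \<bullet> (S *v u)) * (w \<bullet> (S *v w))"
proof (cases "w = 0")
  case True then show ?thesis by simp
next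
  case False
  let ?p = "w \<bullet> (S *v w)" and ?c = "u \<bullet> (S *v w)" and ?uu = "u \<bullet> (S *v u)"
  have p: "?p > 0" using pd False by blast
  define l where "l = ?c / ?p"
  have "0 \<le> (u - l *\<^sub>R w) \<bullet> (S *v (u - l *\<^sub>R w))"
    using pd by (metis order.refl inner_zero_left less_imp_le)
  also have "\<dots> = ?uu - 2 * l * ?c + l^2 * ?p"
    using sym_form[OF sym, of w u]
    by (simp add: algebra_simps inner_diff_left inner_diff_right power2_eq_square)
  also have "\<dots> = ?uu - ?c^2 / ?p"
    using p by (simp add: l_def field_simps power2_eq_square)
  finally show ?thesis using p by (simp add: field_simps)
qed




lemma quad_nsd:
  fixes A B C :: real
  assumes "\<forall>x y. A*x^2 + 2*B*x*y + C*y^2 \<le> 0"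
  shows "A \<le> 0 \<and> B^2 \<le> A*C"
proof -
  have A: "A \<le> 0" using assms[rule_format, of 1 0] by simp
  show ?thesis
  proof (cases "A = 0")
    case True
    have "B = 0"
    proof (rule ccontr)
      assume "B \<noteq> 0"
      have "A*((\<bar>C\<bar>+1)/(2*B))^2 + 2*B*((\<bar>C\<bar>+1)/(2*B))*1 + C*1^2 \<le> 0"
        using assms by blast
      moreover have "2*B*((\<bar>C\<bar>+1)/(2*B)) = \<bar>C\<bar>+1" using \<open>B \<noteq> 0\<close> by simp
      ultimately show False using True by simp
    qed
    then show ?thesis using True by simp
  next
    case False
    have "A*B^2 + 2*B*B*(-A) + C*(-A)^2 \<le> 0" using assms by blast
    then have "A * (A*C - B^2) \<le> 0" by (simp add: algebra_simps power2_eq_square)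
    then have "A*C - B^2 \<ge> 0" using A False
      by (smt (verit) mult_neg_neg)
    then show ?thesis using A by simp
  qed
qed

lemma R1:
  fixes q a R p c r u y :: real
  assumes q: "q > 0" and a: "a > 0" and R: "R \<ge> 0" and p: "p \<ge> 0" and cs: "q * c^2 \<le> p * R"
    and cond: "(r-1)*u^2 + 2*r*a*u + (r+1)*a^2 + p \<le> 0"
  shows "(r-1)*(u*y+c)^2 + 2*r*a*(u*y+c)*y + (r+1)*a^2*y^2 - (a^2/q)*R \<le> 0"
proof -
  define A1 where "A1 = (r-1)*u^2 + 2*r*a*u + (r+1)*a^2"
  define B1 where "B1 = (r-1)*u + r*a"
  have id: "(r-1)*(u*y+c)^2 + 2*r*a*(u*y+c)*y + (r+1)*a^2*y^2 - (a^2/q)*R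
      = A1*y^2 + 2*B1*y*c + (r-1)*c^2 - (a^2/q)*R"
    by (simp add: A1_def B1_def algebra_simps power2_eq_square)
  have detid: "A1*(r-1) - B1^2 = -(a^2)"
    by (simp add: A1_def B1_def algebra_simps power2_eq_square)
  have A1: "A1 \<le> - p" using cond by (simp add: A1_def)
  show ?thesis
  proof (cases "p = 0")
    case True
    then have "c^2 \<le> 0" using cs q by (simp add: mult_le_0_iff)
    then have "c = 0" by simp
    moreover have "A1*y^2 \<le> 0" using A1 True by (simp add: mult_nonpos_nonneg)
    moreover have "(a^2/q)*R \<ge> 0" using q R by simp
    ultimately show ?thesis unfolding id by simp
  next
    case False
    then have pp: "p > 0" using p by simp
    have "R \<ge> q*c^2/p" using cs pp by (simp add: field_simps)
    then have "(a^2/q)*R \<ge> (a^2/q)*(q*c^2/p)" using q by (intro mult_left_mono) auto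
    also have "(a^2/q)*(q*c^2/p) = a^2*c^2/p" using q by simp
    finally have le: "(a^2/q)*R \<ge> a^2*c^2/p" .
    define E' where "E' = A1*y^2 + 2*B1*y*c + (r-1)*c^2 - a^2*c^2/p"
    have "A1*p*E' = p*(A1*y+B1*c)^2 - a^2*(p+A1)*c^2"
    proof -
      have "A1*p*E' = p*(A1^2*y^2 + 2*A1*B1*y*c) + p*(A1*(r-1))*c^2 - A1*a^2*c^2"
        using pp by (simp add: E'_def algebra_simps power2_eq_square)
      also have "\<dots> = p*(A1^2*y^2 + 2*A1*B1*y*c) + p*(B1^2 - a^2)*c^2 - A1*a^2*c^2"
      proof -
        have "A1*(r-1) = B1^2 - a^2" using detid by linarith
        then show ?thesis by simp
      qed
      finally show ?thesis by (simp add: algebra_simps power2_eq_square)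
    qed
    moreover have "p*(A1*y+B1*c)^2 \<ge> 0" using pp by simp
    moreover have "-(a^2)*(p+A1)*c^2 \<ge> 0"
    proof -
      have "a^2*(p+A1) \<le> 0" using A1 by (simp add: mult_nonneg_nonpos)
      then have "a^2*(p+A1)*c^2 \<le> 0" by (simp add: mult_nonpos_nonneg)
      then show ?thesis by simp
    qed
    ultimately have "A1*p*E' \<ge> 0" by linarith
    moreover have "A1*p < 0" using A1 pp by (simp add: mult_neg_pos)
    ultimately have "E' \<le> 0" by (smt (verit) mult_neg_pos)
    then show ?thesis unfolding id using le E'_def by linarith
  qed
qed

lemma R2:
  fixes a p r u :: real
  assumes a: "a > 0" and p: "p \<ge> 0"
    and H: "\<forall>y g. (r-1)*(u*y+g*p)^2 + 2*r*a*(u*y+g*p)*y + (r+1)*a^2*y^2 - a^2*g^2*p \<le> 0"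
  shows "(r-1)*u^2 + 2*r*a*u + (r+1)*a^2 + p \<le> 0"
proof -
  define A1 where "A1 = (r-1)*u^2 + 2*r*a*u + (r+1)*a^2"
  define B1 where "B1 = (r-1)*u + r*a"
  have detid: "A1*(r-1) = B1^2 - a^2"
    by (simp add: A1_def B1_def algebra_simps power2_eq_square)
  have "\<forall>y g. A1*y^2 + 2*(B1*p)*y*g + ((r-1)*p^2 - a^2*p)*g^2 \<le> 0"
  proof (intro allI)
    fix y g
    have "A1*y^2 + 2*(B1*p)*y*g + ((r-1)*p^2 - a^2*p)*g^2
       = (r-1)*(u*y+g*p)^2 + 2*r*a*(u*y+g*p)*y + (r+1)*a^2*y^2 - a^2*g^2*p"
      by (simp add: A1_def B1_def algebra_simps power2_eq_square)
    then show "A1*y^2 + 2*(B1*p)*y*g + ((r-1)*p^2 - a^2*p)*g^2 \<le> 0" using H by simp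
  qed
  from quad_nsd[OF this] have A: "A1 \<le> 0" and D: "(B1*p)^2 \<le> A1*((r-1)*p^2 - a^2*p)" by auto
  have "A1*((r-1)*p^2 - a^2*p) = p^2*(B1^2 - a^2) - a^2*p*A1"
  proof -
    have "A1*((r-1)*p^2 - a^2*p) = (A1*(r-1))*p^2 - a^2*p*A1" by (simp add: algebra_simps)
    then show ?thesis using detid by simp
  qed
  with D have "0 \<le> -(a^2)*p*(p + A1)" by (simp add: algebra_simps power2_eq_square)
  then show ?thesis
  proof (cases "p = 0")
    case True then show ?thesis using A A1_def by simp
  next
    case False
    then have "a^2*p > 0" using a p by simp
    then have "p + A1 \<le> 0" using \<open>0 \<le> -(a^2)*p*(p + A1)\<close>
      by (metis mult.assoc mult_minus_left neg_0_le_iff_le zero_le_mult_iff not_le)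
    then show ?thesis by (simp add: A1_def)
  qed
qed



lemma bil_exp:
  fixes S :: "real^'n^'n"
  shows "(k1 *\<^sub>R a1 + k2 *\<^sub>R a2) \<bullet> (S *v (l1 *\<^sub>R b1 + l2 *\<^sub>R b2))
    = k1*l1*(a1 \<bullet> (S *v b1)) + k1*l2*(a1 \<bullet> (S *v b2)) + k2*l1*(a2 \<bullet> (S *v b1)) + k2*l2*(a2 \<bullet> (S *v b2))"
  by (simp add: matrix_vector_right_distrib matrix_vector_mult_scaleR inner_add_left inner_add_right algebra_simps)

lemma key:
  fixes S :: "real^'n^'n" and mu x :: "real^'n" and a r :: real
  assumes sym: "transpose S = S" and pd: "\<forall>x. x \<noteq> 0 \<longrightarrow> 0 < x \<bullet> (S *v x)"
    and x: "x \<noteq> 0" and a: "a > 0"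
  shows "(\<forall>v. (r-1)*(mu \<bullet> v)^2 + 2*r*(a/(x \<bullet> (S *v x)))*(mu \<bullet> v)*((S *v x) \<bullet> v)
            + (r+2)*(a^2/(x \<bullet> (S *v x))^2)*((S *v x) \<bullet> v)^2 - (a^2/(x \<bullet> (S *v x)))*(v \<bullet> (S *v v)) \<le> 0)
     \<longleftrightarrow> (x \<bullet> (S *v x)) * (mu \<bullet> (matrix_inv S *v mu)) \<le> (2-r)*(mu \<bullet> x)^2 - 2*r*a*(mu \<bullet> x) - (r+1)*a^2"
proof -
  define q where "q = x \<bullet> (S *v x)"
  define nu where "nu = matrix_inv S *v mu"
  have q: "q > 0" using pd x by (simp add: q_def)
  have Snu: "S *v nu = mu" using inv_apply[OF pd] by (simp add: nu_def)
  have muv: "mu \<bullet> v = nu \<bullet> (S *v v)" for v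
    using sym_form[OF sym, of v nu] Snu by (simp add: inner_commute)
  have Sxv: "(S *v x) \<bullet> v = x \<bullet> (S *v v)" for v
    using sym_form[OF sym, of v x] by (simp add: inner_commute)
  define M where "M = nu \<bullet> (S *v nu)"
  have MM: "mu \<bullet> (matrix_inv S *v mu) = M" using muv[of nu] by (simp add: M_def nu_def)
  define al where "al = nu \<bullet> (S *v x)"
  have alx: "mu \<bullet> x = al" using muv[of x] by (simp add: al_def)
  have xnu: "x \<bullet> (S *v nu) = al" using sym_form[OF sym, of x nu] by (simp add: al_def)
  define p where "p = q*M - al^2"
  have p: "p \<ge> 0" using cs_form[OF sym pd, of nu x] by (simp add: p_def al_def M_def q_def mult.commute)
  have cond: "q*M \<le> (2-r)*al^2 - 2*r*a*al - (r+1)*a^2 \<longleftrightarrow> (r-1)*al^2 + 2*r*a*al + (r+1)*a^2 + p \<le> 0"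
    by (simp add: p_def algebra_simps)
  define Qf where "Qf v = (r-1)*(mu \<bullet> v)^2 + 2*r*(a/q)*(mu \<bullet> v)*((S *v x) \<bullet> v)
            + (r+2)*(a^2/q^2)*((S *v x) \<bullet> v)^2 - (a^2/q)*(v \<bullet> (S *v v))" for v
  have "(\<forall>v. Qf v \<le> 0) \<longleftrightarrow> (r-1)*al^2 + 2*r*a*al + (r+1)*a^2 + p \<le> 0"
  proof
    assume H: "\<forall>v. Qf v \<le> 0"
    show "(r-1)*al^2 + 2*r*a*al + (r+1)*a^2 + p \<le> 0"
    proof (rule R2[OF a p], intro allI)
      fix y g
      define v where "v = (y - g*al) *\<^sub>R x + (g*q) *\<^sub>R nu"
      have m: "nu \<bullet> (S *v v) = al*y + g*p"
        unfolding v_def using bil_exp[of 0 nu 1 nu S "y - g*al" x "g*q" nu]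
        by (simp add: M_def[symmetric] al_def[symmetric] p_def algebra_simps power2_eq_square)
      have z: "x \<bullet> (S *v v) = q*y"
        unfolding v_def using bil_exp[of 0 x 1 x S "y - g*al" x "g*q" nu]
        by (simp add: q_def[symmetric] xnu algebra_simps)
      have P: "v \<bullet> (S *v v) = q*(y^2 + g^2*p)"
        unfolding v_def using bil_exp[of "y - g*al" x "g*q" nu S "y - g*al" x "g*q" nu] xnu
        by (simp add: q_def[symmetric] M_def[symmetric] al_def[symmetric] p_def algebra_simps power2_eq_square)
      have "Qf v = (r-1)*(al*y + g*p)^2 + 2*r*(a/q)*(al*y + g*p)*(q*y)
            + (r+2)*(a^2/q^2)*(q*y)^2 - (a^2/q)*(q*(y^2 + g^2*p))"
        unfolding Qf_def muv Sxv m z P by simp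
      also have "\<dots> = (r-1)*(al*y+g*p)^2 + 2*r*a*(al*y+g*p)*y + (r+1)*a^2*y^2 - a^2*g^2*p"
        using q by (simp add: field_simps power2_eq_square)
      finally show "(r-1)*(al*y+g*p)^2 + 2*r*a*(al*y+g*p)*y + (r+1)*a^2*y^2 - a^2*g^2*p \<le> 0"
        using H by metis
    qed
  next
    assume C: "(r-1)*al^2 + 2*r*a*al + (r+1)*a^2 + p \<le> 0"
    show "\<forall>v. Qf v \<le> 0"
    proof
      fix v
      define m where "m = nu \<bullet> (S *v v)"
      define z where "z = x \<bullet> (S *v v)"
      define P where "P = v \<bullet> (S *v v)"
      define y where "y = z/q"
      define c where "c = m - al*y"
      define R where "R = P - z^2/q"
      have R: "R \<ge> 0"
        using cs_form[OF sym pd, of x v] q by (simp add: R_def z_def P_def q_def field_simps)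
      have e1: "(1 *\<^sub>R nu + (-(al/q)) *\<^sub>R x) \<bullet> (S *v (1 *\<^sub>R v + (-y) *\<^sub>R x)) = c"
        unfolding bil_exp using q
        by (simp add: c_def m_def z_def y_def al_def[symmetric] q_def[symmetric] field_simps)
      have e2: "(1 *\<^sub>R nu + (-(al/q)) *\<^sub>R x) \<bullet> (S *v (1 *\<^sub>R nu + (-(al/q)) *\<^sub>R x)) = p/q"
        unfolding bil_exp using q xnu
        by (simp add: p_def M_def[symmetric] al_def[symmetric] q_def[symmetric] field_simps power2_eq_square)
      have e3: "(1 *\<^sub>R v + (-y) *\<^sub>R x) \<bullet> (S *v (1 *\<^sub>R v + (-y) *\<^sub>R x)) = R"
        unfolding bil_exp using q sym_form[OF sym, of v x]
        by (simp add: R_def P_def z_def y_def q_def[symmetric] field_simps power2_eq_square)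
      have "c^2 \<le> (p/q) * R"
        using cs_form[OF sym pd, of "1 *\<^sub>R nu + (-(al/q)) *\<^sub>R x" "1 *\<^sub>R v + (-y) *\<^sub>R x"]
        unfolding e1 e2 e3 .
      then have cs: "q*c^2 \<le> p*R" using q by (simp add: field_simps)
      have "Qf v = (r-1)*(al*y+c)^2 + 2*r*a*(al*y+c)*y + (r+1)*a^2*y^2 - (a^2/q)*R"
        unfolding Qf_def muv Sxv m_def[symmetric] z_def[symmetric] P_def[symmetric]
        using q by (simp add: c_def y_def R_def field_simps power2_eq_square)
      also have "\<dots> \<le> 0" by (rule R1[OF q a R p cs C])
      finally show "Qf v \<le> 0" .
    qed
  qed
  then show ?thesis unfolding Qf_def q_def[symmetric] MM alx cond .
qed



lemma grad_unique:
  fixes a c :: "real^'n"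
  assumes "(\<lambda>h. a \<bullet> h) = (\<lambda>h. c \<bullet> h)"
  shows "a = c"
proof -
  have "a \<bullet> (a - c) = c \<bullet> (a - c)" using assms by metis
  then have "(a - c) \<bullet> (a - c) = 0" by (simp add: inner_diff_left)
  then show ?thesis by simp
qed

lemma hess:
  fixes f :: "real^'n \<Rightarrow> real" and G :: "real^'n \<Rightarrow> real^'n"
  assumes S: "open S" "x \<in> S"
    and fd: "\<And>y. y \<in> S \<Longrightarrow> (f has_derivative (\<lambda>h. G y \<bullet> h)) (at y)"
    and GD: "(G has_derivative D) (at x)"
  shows "has_hessian_at f x (matrix D)"
    and "has_hessian_at f x H \<Longrightarrow> H *v v = D v"
proof -
  have ev: "\<forall>\<^sub>F y in nhds x. y \<in> S" using S eventually_nhds_in_open by blast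
  have bl: "bounded_linear D" using GD has_derivative_bounded_linear by blast
  show "has_hessian_at f x (matrix D)"
    unfolding has_hessian_at_def
    using ev fd GD bl by (auto intro!: exI[of _ G] elim!: eventually_mono)
  assume "has_hessian_at f x H"
  then obtain g where g1: "\<forall>\<^sub>F y in nhds x. (f has_derivative (\<lambda>h. g y \<bullet> h)) (at y)"
    and g2: "(g has_derivative (\<lambda>h. H *v h)) (at x)"
    unfolding has_hessian_at_def by blast
  have eq: "\<forall>\<^sub>F y in nhds x. g y = G y"
    using g1 ev
  proof eventually_elim
    case (elim y)
    then show ?case using fd[of y] has_derivative_unique grad_unique by metis
  qed
  have "g x = G x" using eq eventually_nhds_x_imp_x by blast
  moreover have "\<forall>\<^sub>F y in at x. g y = G y" using eq eventually_nhds_conv_at by (metis eventually_at_filter eventually_mono)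
  ultimately have "(G has_derivative (\<lambda>h. H *v h)) (at x)"
    using has_derivative_transform_eventually[OF g2] by auto
  then have "(\<lambda>h. H *v h) = D" using GD has_derivative_unique by blast
  then show "H *v v = D v" by metis
qed



lemma open_E: "open {x::real^'n. x \<noteq> 0 \<and> b - mu \<bullet> x > 0}"
proof -
  have "{x::real^'n. x \<noteq> 0 \<and> b - mu \<bullet> x > 0} = (UNIV - {0}) \<inter> {x. mu \<bullet> x < b}" by auto
  then show ?thesis using open_halfspace_lt[of mu b] by (simp add: open_Diff open_Int)
qed

lemma d_q:
  fixes S :: "real^'n^'n"
  assumes sym: "transpose S = S"
  shows "((\<lambda>y. y \<bullet> (S *v y)) has_derivative (\<lambda>h. 2 * ((S *v y) \<bullet> h))) (at y)"
proof -
  have l: "((\<lambda>y. S *v y) has_derivative (\<lambda>h. S *v h)) (at y)"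
    by (rule bounded_linear_imp_has_derivative) simp
  have "((\<lambda>y. y \<bullet> (S *v y)) has_derivative (\<lambda>h. y \<bullet> (S *v h) + h \<bullet> (S *v y))) (at y)"
    by (rule has_derivative_inner[OF has_derivative_ident l])
  moreover have "(\<lambda>h. y \<bullet> (S *v h) + h \<bullet> (S *v y)) = (\<lambda>h. 2 * ((S *v y) \<bullet> h))"
    using sym_form[OF sym, of y] by (auto simp: inner_commute)
  ultimately show ?thesis by simp
qed

lemma d_F:
  fixes S :: "real^'n^'n"
  assumes sym: "transpose S = S" and a: "b - mu \<bullet> y > 0" and q: "y \<bullet> (S *v y) > 0"
  shows "((\<lambda>y. (b - mu \<bullet> y) powr r * (y \<bullet> (S *v y)) powr (-r/2)) has_derivative
     (\<lambda>h. - r * ((b - mu \<bullet> y) powr r * (y \<bullet> (S *v y)) powr (-r/2)) * ((mu \<bullet> h)/(b - mu \<bullet> y) + ((S *v y) \<bullet> h)/(y \<bullet> (S *v y))))) (at y)"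
proof -
  have da: "((\<lambda>y. b - mu \<bullet> y) has_derivative (\<lambda>h. -(mu \<bullet> h))) (at y)"
    by (auto intro!: derivative_eq_intros)
  have p1: "((\<lambda>y. (b - mu \<bullet> y) powr r) has_derivative
      (\<lambda>h. (b - mu \<bullet> y) powr r * (0 * ln (b - mu \<bullet> y) + -(mu \<bullet> h) * r / (b - mu \<bullet> y)))) (at y)"
    by (rule has_derivative_powr[OF da has_derivative_const a UNIV_I])
  have p2: "((\<lambda>y. (y \<bullet> (S *v y)) powr (-r/2)) has_derivative
      (\<lambda>h. (y \<bullet> (S *v y)) powr (-r/2) * (0 * ln (y \<bullet> (S *v y)) + 2 * ((S *v y) \<bullet> h) * (-r/2) / (y \<bullet> (S *v y))))) (at y)"
    by (rule has_derivative_powr[OF d_q[OF sym] has_derivative_const q UNIV_I])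
  have "((\<lambda>y. (b - mu \<bullet> y) powr r * (y \<bullet> (S *v y)) powr (-r/2)) has_derivative
     (\<lambda>h. (b - mu \<bullet> y) powr r * ((y \<bullet> (S *v y)) powr (-r/2) * (0 * ln (y \<bullet> (S *v y)) + 2 * ((S *v y) \<bullet> h) * (-r/2) / (y \<bullet> (S *v y))))
        + (b - mu \<bullet> y) powr r * (0 * ln (b - mu \<bullet> y) + -(mu \<bullet> h) * r / (b - mu \<bullet> y)) * (y \<bullet> (S *v y)) powr (-r/2))) (at y)"
    by (rule has_derivative_mult[OF p1 p2])
  moreover have "(\<lambda>h. (b - mu \<bullet> y) powr r * ((y \<bullet> (S *v y)) powr (-r/2) * (0 * ln (y \<bullet> (S *v y)) + 2 * ((S *v y) \<bullet> h) * (-r/2) / (y \<bullet> (S *v y))))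
        + (b - mu \<bullet> y) powr r * (0 * ln (b - mu \<bullet> y) + -(mu \<bullet> h) * r / (b - mu \<bullet> y)) * (y \<bullet> (S *v y)) powr (-r/2))
     = (\<lambda>h. - r * ((b - mu \<bullet> y) powr r * (y \<bullet> (S *v y)) powr (-r/2)) * ((mu \<bullet> h)/(b - mu \<bullet> y) + ((S *v y) \<bullet> h)/(y \<bullet> (S *v y))))"
    by (rule ext) (simp add: field_simps)
  ultimately show ?thesis by simp
qed

lemma d_G:
  fixes S :: "real^'n^'n" and mu :: "real^'n"
  assumes d1: "(c1 has_derivative c1') (at x)" and d2: "(c2 has_derivative c2') (at x)"
  shows "((\<lambda>y. c1 y *\<^sub>R mu + c2 y *\<^sub>R (S *v y)) has_derivative
    (\<lambda>v. c1' v *\<^sub>R mu + (c2' v *\<^sub>R (S *v x) + c2 x *\<^sub>R (S *v v)))) (at x)"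
proof -
  have l: "((\<lambda>y. S *v y) has_derivative (\<lambda>h. S *v h)) (at x)"
    by (rule bounded_linear_imp_has_derivative) simp
  have "((\<lambda>y. c1 y *\<^sub>R mu) has_derivative (\<lambda>v. c1' v *\<^sub>R mu)) (at x)"
    using has_derivative_scaleR[OF d1 has_derivative_const[of mu]] by simp
  moreover have "((\<lambda>y. c2 y *\<^sub>R (S *v y)) has_derivative (\<lambda>v. c2 x *\<^sub>R (S *v v) + c2' v *\<^sub>R (S *v x))) (at x)"
    using has_derivative_scaleR[OF d2 l] by simp
  ultimately show ?thesis
    by (rule has_derivative_add[THEN has_derivative_eq_rhs]) (auto simp: algebra_simps)
qed

lemma powr_eq:
  fixes a q r :: real
  assumes "a > 0" "q > 0"
  shows "(a / sqrt q) powr r = a powr r * q powr (-r/2)"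
proof -
  have 0: "sqrt q = q powr (1/2)" using assms by (simp add: powr_half_sqrt)
  have 1: "sqrt q powr r = q powr (r/2)"
    unfolding 0 powr_powr by (rule arg_cong[where f="\<lambda>e. q powr e"]) simp
  have 2: "q powr (-r/2) = inverse (q powr (r/2))"
    using powr_minus[of q "r/2"] by simp
  have "(a / sqrt q) powr r = a powr r / sqrt q powr r"
    by (rule powr_divide)
  also have "\<dots> = a powr r * q powr (-r/2)" unfolding 1 2 by (simp only: divide_inverse)
  finally show ?thesis .
qed

lemma powr_alg:
  fixes a q c r F m z P :: real
  assumes "a > 0" "q > 0"
  shows "c * (((-r * (- r * F * (m/a + z/q))) * a - (-r * F) * (-m)) / (a * a)) * m
    + c * (((-r * (- r * F * (m/a + z/q))) * q - (-r * F) * (2 * z)) / (q * q)) * z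
    + c * (-r * F / q) * P
   = c * r * F / a^2 * ((r-1)*m^2 + 2*r*(a/q)*m*z + (r+2)*(a^2/q^2)*z^2 - (a^2/q)*P)"
proof -
  have "a \<noteq> 0" "q \<noteq> 0" using assms by auto
  then show ?thesis by (simp add: divide_simps power2_eq_square; algebra)
qed

lemma powr_hess:
  fixes S :: "real^'n^'n" and mu x :: "real^'n" and b r c :: real
  assumes sym: "transpose S = S" and pd: "\<forall>x. x \<noteq> 0 \<longrightarrow> 0 < x \<bullet> (S *v x)"
    and x: "x \<noteq> 0" and ax: "b - mu \<bullet> x > 0"
  defines "f \<equiv> (\<lambda>y. c * ((b - mu \<bullet> y) / sqrt (y \<bullet> (S *v y))) powr r)"
  shows "\<exists>H. has_hessian_at f x H"
    and "has_hessian_at f x H \<Longrightarrow> v \<bullet> (H *v v) =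
       c * r * ((b - mu \<bullet> x) powr r * (x \<bullet> (S *v x)) powr (-r/2)) / (b - mu \<bullet> x)^2 *
       ((r-1)*(mu \<bullet> v)^2 + 2*r*((b - mu \<bullet> x)/(x \<bullet> (S *v x)))*(mu \<bullet> v)*((S *v x) \<bullet> v)
            + (r+2)*((b - mu \<bullet> x)^2/(x \<bullet> (S *v x))^2)*((S *v x) \<bullet> v)^2 - ((b - mu \<bullet> x)^2/(x \<bullet> (S *v x)))*(v \<bullet> (S *v v)))"
proof -
  define E where "E = {x::real^'n. x \<noteq> 0 \<and> b - mu \<bullet> x > 0}"
  define A where "A = (\<lambda>y. b - mu \<bullet> y)"
  define Q where "Q = (\<lambda>y::real^'n. y \<bullet> (S *v y))"
  define F where "F = (\<lambda>y. A y powr r * Q y powr (-r/2))"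
  have oE: "open E" unfolding E_def by (rule open_E)
  have xE: "x \<in> E" using x ax by (simp add: E_def)
  have posA: "A y > 0" if "y \<in> E" for y using that by (simp add: E_def A_def)
  have posQ: "Q y > 0" if "y \<in> E" for y using that pd by (simp add: E_def Q_def)
  have dA: "(A has_derivative (\<lambda>h. -(mu \<bullet> h))) (at y)" for y
    unfolding A_def by (auto intro!: derivative_eq_intros)
  have dQ: "(Q has_derivative (\<lambda>h. 2 * ((S *v y) \<bullet> h))) (at y)" for y
    unfolding Q_def by (rule d_q[OF sym])
  have dF: "(F has_derivative (\<lambda>h. - r * F y * ((mu \<bullet> h)/A y + ((S *v y) \<bullet> h)/Q y))) (at y)" if "y \<in> E" for y
    using d_F[OF sym, of b mu y r] posA[OF that] posQ[OF that] unfolding F_def A_def Q_def by simp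
  define G where "G = (\<lambda>y. (c * (-r * F y / A y)) *\<^sub>R mu + (c * (-r * F y / Q y)) *\<^sub>R (S *v y))"
  have fF: "f y = c * F y" if "y \<in> E" for y
    using powr_eq[OF posA[OF that] posQ[OF that]] unfolding f_def F_def A_def Q_def by simp
  have fd: "(f has_derivative (\<lambda>h. G y \<bullet> h)) (at y)" if "y \<in> E" for y
  proof -
    have "((\<lambda>y. c * F y) has_derivative (\<lambda>h. c * (- r * F y * ((mu \<bullet> h)/A y + ((S *v y) \<bullet> h)/Q y)))) (at y)"
      by (rule has_derivative_mult_right[OF dF[OF that]])
    moreover have "(\<lambda>h. c * (- r * F y * ((mu \<bullet> h)/A y + ((S *v y) \<bullet> h)/Q y))) = (\<lambda>h. G y \<bullet> h)"
      by (rule ext) (simp add: G_def inner_add_left algebra_simps add_divide_distrib)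
    ultimately have "((\<lambda>y. c * F y) has_derivative (\<lambda>h. G y \<bullet> h)) (at y)" by simp
    then show ?thesis
      by (rule has_derivative_transform_within_open[OF _ oE that]) (simp add: fF)
  qed
  have d1: "((\<lambda>y. c * (-r * F y / A y)) has_derivative
      (\<lambda>v. c * (((-r * (- r * F x * ((mu \<bullet> v)/A x + ((S *v x) \<bullet> v)/Q x))) * A x - (-r * F x) * (-(mu \<bullet> v))) / (A x * A x)))) (at x)"
    by (rule has_derivative_mult_right, rule has_derivative_divide'[OF has_derivative_mult_right[OF dF[OF xE]] dA])
      (use posA[OF xE] in simp)
  have d2: "((\<lambda>y. c * (-r * F y / Q y)) has_derivative
      (\<lambda>v. c * (((-r * (- r * F x * ((mu \<bullet> v)/A x + ((S *v x) \<bullet> v)/Q x))) * Q x - (-r * F x) * (2 * ((S *v x) \<bullet> v))) / (Q x * Q x)))) (at x)"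
    by (rule has_derivative_mult_right, rule has_derivative_divide'[OF has_derivative_mult_right[OF dF[OF xE]] dQ])
      (use posQ[OF xE] in simp)
  note dG = d_G[OF d1 d2, of mu S, folded G_def]
  show "\<exists>H. has_hessian_at f x H" using hess(1)[OF oE xE fd dG] by blast
  assume "has_hessian_at f x H"
  note Hv = hess(2)[OF oE xE fd dG this]
  have a0: "A x > 0" and q0: "Q x > 0" using posA[OF xE] posQ[OF xE] by auto
  have aX: "A x = b - mu \<bullet> x" by (simp add: A_def)
  have qX: "Q x = x \<bullet> (S *v x)" by (simp add: Q_def)
  have fX: "F x = (b - mu \<bullet> x) powr r * (x \<bullet> (S *v x)) powr (-r/2)" by (simp add: F_def A_def Q_def)
  have Sv: "v \<bullet> (S *v x) = (S *v x) \<bullet> v" by (simp add: inner_commute)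
  have "v \<bullet> (H *v v) = c * (((-r * (- r * F x * ((mu \<bullet> v)/A x + ((S *v x) \<bullet> v)/Q x))) * A x - (-r * F x) * (-(mu \<bullet> v))) / (A x * A x)) * (mu \<bullet> v)
    + c * (((-r * (- r * F x * ((mu \<bullet> v)/A x + ((S *v x) \<bullet> v)/Q x))) * Q x - (-r * F x) * (2 * ((S *v x) \<bullet> v))) / (Q x * Q x)) * ((S *v x) \<bullet> v)
    + c * (-r * F x / Q x) * (v \<bullet> (S *v v))"
    by (simp only: Hv[of v] inner_add_right inner_scaleR_right inner_commute[of v mu] Sv add.assoc)
  also have "\<dots> = c * r * F x / (A x)^2 * ((r-1)*(mu \<bullet> v)^2 + 2*r*(A x/Q x)*(mu \<bullet> v)*((S *v x) \<bullet> v)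
       + (r+2)*((A x)^2/(Q x)^2)*((S *v x) \<bullet> v)^2 - ((A x)^2/Q x)*(v \<bullet> (S *v v)))"
    by (rule powr_alg[OF a0 q0])
  finally show "v \<bullet> (H *v v) =
       c * r * ((b - mu \<bullet> x) powr r * (x \<bullet> (S *v x)) powr (-r/2)) / (b - mu \<bullet> x)^2 *
       ((r-1)*(mu \<bullet> v)^2 + 2*r*((b - mu \<bullet> x)/(x \<bullet> (S *v x)))*(mu \<bullet> v)*((S *v x) \<bullet> v)
            + (r+2)*((b - mu \<bullet> x)^2/(x \<bullet> (S *v x))^2)*((S *v x) \<bullet> v)^2 - ((b - mu \<bullet> x)^2/(x \<bullet> (S *v x)))*(v \<bullet> (S *v v)))"
    unfolding fX aX qX .
qed



lemma ln_alg:
  fixes a q m z P :: real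
  assumes "a > 0" "q > 0"
  shows "((0 * a - (-1) * (-m)) / (a * a)) * m + ((0 * q - (-1) * (2 * z)) / (q * q)) * z + (-1 / q) * P
    = 1 / a^2 * (- (m^2) + 2*(a^2/q^2)*z^2 - (a^2/q)*P)"
proof -
  have "a \<noteq> 0" "q \<noteq> 0" using assms by auto
  then show ?thesis by (simp add: divide_simps power2_eq_square; algebra)
qed

lemma ln_hess:
  fixes S :: "real^'n^'n" and mu x :: "real^'n" and b :: real
  assumes sym: "transpose S = S" and pd: "\<forall>x. x \<noteq> 0 \<longrightarrow> 0 < x \<bullet> (S *v x)"
    and x: "x \<noteq> 0" and ax: "b - mu \<bullet> x > 0"
  defines "f \<equiv> (\<lambda>y. ln ((b - mu \<bullet> y) / sqrt (y \<bullet> (S *v y))))"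
  shows "\<exists>H. has_hessian_at f x H"
    and "has_hessian_at f x H \<Longrightarrow> v \<bullet> (H *v v) =
       1 / (b - mu \<bullet> x)^2 * (- ((mu \<bullet> v)^2) + 2*((b - mu \<bullet> x)^2/(x \<bullet> (S *v x))^2)*((S *v x) \<bullet> v)^2
          - ((b - mu \<bullet> x)^2/(x \<bullet> (S *v x)))*(v \<bullet> (S *v v)))"
proof -
  define E where "E = {x::real^'n. x \<noteq> 0 \<and> b - mu \<bullet> x > 0}"
  define A where "A = (\<lambda>y. b - mu \<bullet> y)"
  define Q where "Q = (\<lambda>y::real^'n. y \<bullet> (S *v y))"
  have oE: "open E" unfolding E_def by (rule open_E)
  have xE: "x \<in> E" using x ax by (simp add: E_def)
  have posA: "A y > 0" if "y \<in> E" for y using that by (simp add: E_def A_def)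
  have posQ: "Q y > 0" if "y \<in> E" for y using that pd by (simp add: E_def Q_def)
  have dA: "(A has_derivative (\<lambda>h. -(mu \<bullet> h))) (at y)" for y
    unfolding A_def by (auto intro!: derivative_eq_intros)
  have dQ: "(Q has_derivative (\<lambda>h. 2 * ((S *v y) \<bullet> h))) (at y)" for y
    unfolding Q_def by (rule d_q[OF sym])
  define G where "G = (\<lambda>y. (-1 / A y) *\<^sub>R mu + (-1 / Q y) *\<^sub>R (S *v y))"
  have fF: "f y = ln (A y) - 1/2 * ln (Q y)" if "y \<in> E" for y
    using posA[OF that] posQ[OF that] unfolding f_def A_def Q_def
    by (simp add: ln_divide_pos ln_sqrt)
  have fd: "(f has_derivative (\<lambda>h. G y \<bullet> h)) (at y)" if "y \<in> E" for y
  proof -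
    have l1: "((\<lambda>y. ln (A y)) has_derivative (\<lambda>h. -(mu \<bullet> h) * inverse (A y))) (at y)"
      by (rule has_derivative_ln[OF posA[OF that] dA])
    have l2: "((\<lambda>y. ln (Q y)) has_derivative (\<lambda>h. 2 * ((S *v y) \<bullet> h) * inverse (Q y))) (at y)"
      by (rule has_derivative_ln[OF posQ[OF that] dQ])
    have "((\<lambda>y. ln (A y) - 1/2 * ln (Q y)) has_derivative
       (\<lambda>h. -(mu \<bullet> h) * inverse (A y) - 1/2 * (2 * ((S *v y) \<bullet> h) * inverse (Q y)))) (at y)"
      by (intro has_derivative_diff l1 has_derivative_mult_right l2)
    moreover have "(\<lambda>h. -(mu \<bullet> h) * inverse (A y) - 1/2 * (2 * ((S *v y) \<bullet> h) * inverse (Q y))) = (\<lambda>h. G y \<bullet> h)"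
      using posA[OF that] posQ[OF that] by (intro ext) (simp add: G_def inner_add_left inner_diff_left inverse_eq_divide field_simps)
    ultimately have "((\<lambda>y. ln (A y) - 1/2 * ln (Q y)) has_derivative (\<lambda>h. G y \<bullet> h)) (at y)" by simp
    then show ?thesis
      by (rule has_derivative_transform_within_open[OF _ oE that]) (simp add: fF)
  qed
  have d1: "((\<lambda>y. -1 / A y) has_derivative (\<lambda>v. (0 * A x - (-1) * (-(mu \<bullet> v))) / (A x * A x))) (at x)"
    by (rule has_derivative_divide'[OF has_derivative_const dA]) (use posA[OF xE] in simp)
  have d2: "((\<lambda>y. -1 / Q y) has_derivative (\<lambda>v. (0 * Q x - (-1) * (2 * ((S *v x) \<bullet> v))) / (Q x * Q x))) (at x)"
    by (rule has_derivative_divide'[OF has_derivative_const dQ]) (use posQ[OF xE] in simp)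
  note dG = d_G[OF d1 d2, of mu S, folded G_def]
  show "\<exists>H. has_hessian_at f x H" using hess(1)[OF oE xE fd dG] by blast
  assume "has_hessian_at f x H"
  note Hv = hess(2)[OF oE xE fd dG this]
  have a0: "A x > 0" and q0: "Q x > 0" using posA[OF xE] posQ[OF xE] by auto
  have aX: "A x = b - mu \<bullet> x" by (simp add: A_def)
  have qX: "Q x = x \<bullet> (S *v x)" by (simp add: Q_def)
  have Sv: "v \<bullet> (S *v x) = (S *v x) \<bullet> v" by (simp add: inner_commute)
  have "v \<bullet> (H *v v) = ((0 * A x - (-1) * (-(mu \<bullet> v))) / (A x * A x)) * (mu \<bullet> v)
     + ((0 * Q x - (-1) * (2 * ((S *v x) \<bullet> v))) / (Q x * Q x)) * ((S *v x) \<bullet> v) + (-1 / Q x) * (v \<bullet> (S *v v))"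
    by (simp only: Hv[of v] inner_add_right inner_scaleR_right inner_commute[of v mu] Sv add.assoc)
  also have "\<dots> = 1 / (A x)^2 * (- ((mu \<bullet> v)^2) + 2*((A x)^2/(Q x)^2)*((S *v x) \<bullet> v)^2 - ((A x)^2/Q x)*(v \<bullet> (S *v v)))"
    by (rule ln_alg[OF a0 q0])
  finally show "v \<bullet> (H *v v) =
       1 / (b - mu \<bullet> x)^2 * (- ((mu \<bullet> v)^2) + 2*((b - mu \<bullet> x)^2/(x \<bullet> (S *v x))^2)*((S *v x) \<bullet> v)^2
          - ((b - mu \<bullet> x)^2/(x \<bullet> (S *v x)))*(v \<bullet> (S *v v)))"
    unfolding aX qX .
qed



lemma ex_hess_iff:
  fixes P :: "real^'n^'n \<Rightarrow> bool"
  assumes "\<exists>H. P H" and "\<And>H v. P H \<Longrightarrow> v \<bullet> (H *v v) = Z v"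
  shows "(\<exists>H. P H \<and> (\<forall>v. R (v \<bullet> (H *v v)))) \<longleftrightarrow> (\<forall>v. R (Z v))"
  using assms by metis

lemma cond_eq:
  fixes q a al M r :: real
  assumes q: "q > 0" and a: "a > 0"
  shows "(let \<theta> = a^2 / q in M \<le> (2 - r) * al^2 / q - 2 * r * sqrt \<theta> * al / sqrt q - (r + 1) * \<theta>)
     \<longleftrightarrow> q * M \<le> (2-r)*al^2 - 2*r*a*al - (r+1)*a^2"
proof -
  have s: "sqrt (a^2/q) = a / sqrt q" using a q by (simp add: real_sqrt_divide)
  have sq: "sqrt q * sqrt q = q" using q by simp
  have "(2 - r) * al^2 / q - 2 * r * sqrt (a^2/q) * al / sqrt q - (r + 1) * (a^2/q)
      = ((2-r)*al^2 - 2*r*a*al - (r+1)*a^2) / q"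
    unfolding s using q sq by (simp add: field_simps)
  then show ?thesis using q by (simp add: Let_def pos_le_divide_eq mult.commute)
qed

lemma cond_eq_ln:
  fixes q a al M :: real
  assumes q: "q > 0" and a: "a > 0"
  shows "(let \<theta> = a^2 / q in M \<le> 2 * al^2 / q - \<theta>)
     \<longleftrightarrow> q * M \<le> (2-0)*al^2 - 2*0*a*al - (0+1)*a^2"
  using q by (simp add: Let_def pos_le_divide_eq mult.commute diff_divide_distrib[symmetric])



theorem lemma2p3:
  fixes r b :: real and \<mu> :: "real^'n" and \<Sigma> :: "real^'n^'n"
    and E :: "(real^'n) set" and f :: "real^'n \<Rightarrow> real"
  assumes sym: "transpose \<Sigma> = \<Sigma>"
    and pd: "\<forall>x. x \<noteq> 0 \<longrightarrow> 0 < x \<bullet> (\<Sigma> *v x)"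
    and E_def: "E = {x. x \<noteq> 0 \<and> b - \<mu> \<bullet> x > 0}"
    and f_def: "f = (\<lambda>x. ((b - \<mu> \<bullet> x) / sqrt (x \<bullet> (\<Sigma> *v x))) powr r)"
  shows "(r = 0 \<longrightarrow> locally_concave_on E f)
       \<and> (r \<noteq> 0 \<longrightarrow>
           (locally_convex_on E (\<lambda>x. sgn (- r) * f x) \<longleftrightarrow>
            (\<forall>x\<in>E. let \<theta> = (b - \<mu> \<bullet> x)\<^sup>2 / (x \<bullet> (\<Sigma> *v x)) in
               \<mu> \<bullet> (matrix_inv \<Sigma> *v \<mu>)
                 \<le> (2 - r) * (\<mu> \<bullet> x)\<^sup>2 / (x \<bullet> (\<Sigma> *v x))
                   - 2 * r * sqrt \<theta> * (\<mu> \<bullet> x) / sqrt (x \<bullet> (\<Sigma> *v x))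
                   - (r + 1) * \<theta>)))
       \<and> (locally_concave_on E (\<lambda>x. ln ((b - \<mu> \<bullet> x) / sqrt (x \<bullet> (\<Sigma> *v x)))) \<longleftrightarrow>
            (\<forall>x\<in>E. let \<theta> = (b - \<mu> \<bullet> x)\<^sup>2 / (x \<bullet> (\<Sigma> *v x)) in
               \<mu> \<bullet> (matrix_inv \<Sigma> *v \<mu>) \<le> 2 * (\<mu> \<bullet> x)\<^sup>2 / (x \<bullet> (\<Sigma> *v x)) - \<theta>))"
proof -
  define Qf where "Qf r' x v = (r'-1)*(\<mu> \<bullet> v)^2 + 2*r'*((b - \<mu> \<bullet> x)/(x \<bullet> (\<Sigma> *v x)))*(\<mu> \<bullet> v)*((\<Sigma> *v x) \<bullet> v)
            + (r'+2)*((b - \<mu> \<bullet> x)^2/(x \<bullet> (\<Sigma> *v x))^2)*((\<Sigma> *v x) \<bullet> v)^2 - ((b - \<mu> \<bullet> x)^2/(x \<bullet> (\<Sigma> *v x)))*(v \<bullet> (\<Sigma> *v v))"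
    for r' x v
  have xE: "x \<noteq> 0" "b - \<mu> \<bullet> x > 0" if "x \<in> E" for x using that E_def by auto
  have qpos: "x \<bullet> (\<Sigma> *v x) > 0" if "x \<in> E" for x using pd xE[OF that] by blast
  have keyE: "(\<forall>v. Qf r' x v \<le> 0) \<longleftrightarrow> (x \<bullet> (\<Sigma> *v x)) * (\<mu> \<bullet> (matrix_inv \<Sigma> *v \<mu>))
       \<le> (2-r')*(\<mu> \<bullet> x)^2 - 2*r'*(b - \<mu> \<bullet> x)*(\<mu> \<bullet> x) - (r'+1)*(b - \<mu> \<bullet> x)^2" if "x \<in> E" for x r'
    unfolding Qf_def by (rule key[OF sym pd xE[OF that]])
  have P1: "r = 0 \<longrightarrow> locally_concave_on E f"
  proof
    assume r0: "r = 0"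
    show "locally_concave_on E f"
      unfolding locally_concave_on_def
    proof
      fix x assume x: "x \<in> E"
      have ff: "f = (\<lambda>y. 1 * ((b - \<mu> \<bullet> y) / sqrt (y \<bullet> (\<Sigma> *v y))) powr r)" by (simp add: f_def)
      obtain H where H: "has_hessian_at f x H"
        using powr_hess(1)[OF sym pd xE[OF x], of 1 r] ff by auto
      have "v \<bullet> (H *v v) \<le> 0" for v
        using powr_hess(2)[OF sym pd xE[OF x], of 1 r H v] H ff r0 by simp
      then show "\<exists>H. has_hessian_at f x H \<and> (\<forall>v. v \<bullet> (H *v v) \<le> 0)" using H by blast
    qed
  qed
  have P2: "(locally_convex_on E (\<lambda>x. sgn (- r) * f x) \<longleftrightarrow>
            (\<forall>x\<in>E. let \<theta> = (b - \<mu> \<bullet> x)\<^sup>2 / (x \<bullet> (\<Sigma> *v x)) in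
               \<mu> \<bullet> (matrix_inv \<Sigma> *v \<mu>)
                 \<le> (2 - r) * (\<mu> \<bullet> x)\<^sup>2 / (x \<bullet> (\<Sigma> *v x))
                   - 2 * r * sqrt \<theta> * (\<mu> \<bullet> x) / sqrt (x \<bullet> (\<Sigma> *v x))
                   - (r + 1) * \<theta>))" if r0: "r \<noteq> 0"
  proof -
    have ff: "(\<lambda>x. sgn (- r) * f x) = (\<lambda>y. sgn (-r) * ((b - \<mu> \<bullet> y) / sqrt (y \<bullet> (\<Sigma> *v y))) powr r)"
      by (simp add: f_def)
    have pt: "(\<exists>H. has_hessian_at (\<lambda>x. sgn (- r) * f x) x H \<and> (\<forall>v. 0 \<le> v \<bullet> (H *v v)))
      \<longleftrightarrow> (let \<theta> = (b - \<mu> \<bullet> x)\<^sup>2 / (x \<bullet> (\<Sigma> *v x)) in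
               \<mu> \<bullet> (matrix_inv \<Sigma> *v \<mu>)
                 \<le> (2 - r) * (\<mu> \<bullet> x)\<^sup>2 / (x \<bullet> (\<Sigma> *v x))
                   - 2 * r * sqrt \<theta> * (\<mu> \<bullet> x) / sqrt (x \<bullet> (\<Sigma> *v x))
                   - (r + 1) * \<theta>)" if x: "x \<in> E" for x
    proof -
      define k where "k = sgn (-r) * r * ((b - \<mu> \<bullet> x) powr r * (x \<bullet> (\<Sigma> *v x)) powr (-r/2)) / (b - \<mu> \<bullet> x)^2"
      have Fp: "(b - \<mu> \<bullet> x) powr r * (x \<bullet> (\<Sigma> *v x)) powr (-r/2) > 0"
        using xE[OF x] qpos[OF x] by simp
      have sr: "sgn (-r) * r < 0" using r0 by (cases "r > 0") (auto simp: sgn_if)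
      have kneg: "k < 0" unfolding k_def using Fp sr xE[OF x]
        by (simp add: divide_neg_pos mult_neg_pos)
      have "(\<exists>H. has_hessian_at (\<lambda>x. sgn (- r) * f x) x H \<and> (\<forall>v. 0 \<le> v \<bullet> (H *v v)))
          \<longleftrightarrow> (\<forall>v. 0 \<le> k * Qf r x v)"
      proof (rule ex_hess_iff)
        show "\<exists>H. has_hessian_at (\<lambda>x. sgn (- r) * f x) x H"
          unfolding ff by (rule powr_hess(1)[OF sym pd xE[OF x]])
        fix H v assume "has_hessian_at (\<lambda>x. sgn (- r) * f x) x H"
        then show "v \<bullet> (H *v v) = k * Qf r x v"
          unfolding ff k_def Qf_def by (rule powr_hess(2)[OF sym pd xE[OF x]])
      qed
      also have "\<dots> \<longleftrightarrow> (\<forall>v. Qf r x v \<le> 0)"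
        using kneg by (simp add: zero_le_mult_iff)
      also have "\<dots> \<longleftrightarrow> (x \<bullet> (\<Sigma> *v x)) * (\<mu> \<bullet> (matrix_inv \<Sigma> *v \<mu>))
       \<le> (2-r)*(\<mu> \<bullet> x)^2 - 2*r*(b - \<mu> \<bullet> x)*(\<mu> \<bullet> x) - (r+1)*(b - \<mu> \<bullet> x)^2" by (rule keyE[OF x])
      also have "\<dots> \<longleftrightarrow> (let \<theta> = (b - \<mu> \<bullet> x)\<^sup>2 / (x \<bullet> (\<Sigma> *v x)) in
               \<mu> \<bullet> (matrix_inv \<Sigma> *v \<mu>)
                 \<le> (2 - r) * (\<mu> \<bullet> x)\<^sup>2 / (x \<bullet> (\<Sigma> *v x))
                   - 2 * r * sqrt \<theta> * (\<mu> \<bullet> x) / sqrt (x \<bullet> (\<Sigma> *v x))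
                   - (r + 1) * \<theta>)"
        by (rule cond_eq[OF qpos[OF x] xE(2)[OF x], symmetric])
      finally show ?thesis .
    qed
    show ?thesis
      unfolding locally_convex_on_def using pt by simp
  qed
  have P3: "locally_concave_on E (\<lambda>x. ln ((b - \<mu> \<bullet> x) / sqrt (x \<bullet> (\<Sigma> *v x)))) \<longleftrightarrow>
            (\<forall>x\<in>E. let \<theta> = (b - \<mu> \<bullet> x)\<^sup>2 / (x \<bullet> (\<Sigma> *v x)) in
               \<mu> \<bullet> (matrix_inv \<Sigma> *v \<mu>) \<le> 2 * (\<mu> \<bullet> x)\<^sup>2 / (x \<bullet> (\<Sigma> *v x)) - \<theta>)"
  proof -
    have pt: "(\<exists>H. has_hessian_at (\<lambda>x. ln ((b - \<mu> \<bullet> x) / sqrt (x \<bullet> (\<Sigma> *v x)))) x H \<and> (\<forall>v. v \<bullet> (H *v v) \<le> 0))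
      \<longleftrightarrow> (let \<theta> = (b - \<mu> \<bullet> x)\<^sup>2 / (x \<bullet> (\<Sigma> *v x)) in
               \<mu> \<bullet> (matrix_inv \<Sigma> *v \<mu>) \<le> 2 * (\<mu> \<bullet> x)\<^sup>2 / (x \<bullet> (\<Sigma> *v x)) - \<theta>)" if x: "x \<in> E" for x
    proof -
      define k where "k = 1 / (b - \<mu> \<bullet> x)^2"
      have kpos: "k > 0" unfolding k_def using xE[OF x] by simp
      have "(\<exists>H. has_hessian_at (\<lambda>x. ln ((b - \<mu> \<bullet> x) / sqrt (x \<bullet> (\<Sigma> *v x)))) x H \<and> (\<forall>v. v \<bullet> (H *v v) \<le> 0))
          \<longleftrightarrow> (\<forall>v. k * Qf 0 x v \<le> 0)"
      proof (rule ex_hess_iff)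
        show "\<exists>H. has_hessian_at (\<lambda>x. ln ((b - \<mu> \<bullet> x) / sqrt (x \<bullet> (\<Sigma> *v x)))) x H"
          by (rule ln_hess(1)[OF sym pd xE[OF x]])
        fix H v assume "has_hessian_at (\<lambda>x. ln ((b - \<mu> \<bullet> x) / sqrt (x \<bullet> (\<Sigma> *v x)))) x H"
        from ln_hess(2)[OF sym pd xE[OF x] this, of v]
        show "v \<bullet> (H *v v) = k * Qf 0 x v"
          unfolding k_def Qf_def by simp
      qed
      also have "\<dots> \<longleftrightarrow> (\<forall>v. Qf 0 x v \<le> 0)"
        using kpos by (simp add: mult_le_0_iff)
      also have "\<dots> \<longleftrightarrow> (x \<bullet> (\<Sigma> *v x)) * (\<mu> \<bullet> (matrix_inv \<Sigma> *v \<mu>))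
       \<le> (2-0)*(\<mu> \<bullet> x)^2 - 2*0*(b - \<mu> \<bullet> x)*(\<mu> \<bullet> x) - (0+1)*(b - \<mu> \<bullet> x)^2" by (rule keyE[OF x])
      also have "\<dots> \<longleftrightarrow> (let \<theta> = (b - \<mu> \<bullet> x)\<^sup>2 / (x \<bullet> (\<Sigma> *v x)) in
               \<mu> \<bullet> (matrix_inv \<Sigma> *v \<mu>) \<le> 2 * (\<mu> \<bullet> x)\<^sup>2 / (x \<bullet> (\<Sigma> *v x)) - \<theta>)"
        by (rule cond_eq_ln[OF qpos[OF x] xE(2)[OF x], symmetric])
      finally show ?thesis .
    qed
    show ?thesis unfolding locally_concave_on_def using pt by simp
  qed
  show ?thesis using P1 P2 P3 by blast
qed


end
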